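(* Let $h:\mathbb{R}^n_+\to\mathbb{R}^n$ be continuous. Assume that $h_i(x)\geq 0$ for every $i\in\{1,\dots,n\}$ and every $x\in\mathbb{R}^n_+$ with $x_i=0$, and that there exists no $x\in\mathbb{R}^n_+$ with $x\neq 0$ and $h(x)\geq 0$. Then there exists some $v\in\Delta_n$ with $h(v)\ll 0$.
   Context: $\mathbb{R}^n_+=\{x\in\mathbb{R}^n: x_i\geq 0,\ 1\leq i\leq n\}$. For $x,y\in\mathbb{R}^n$: $x\geq y$ means $x_i\geq y_i$ for all $i$; $x\gg y$ means $x_i>y_i$ for all $i$. Thus $h(x)\geq 0$ means all components of $h(x)$ are nonnegative, and $h(v)\ll 0$ means all components of $h(v)$ are strictly negative. $\Delta_n$ denotes the standard simplex in $\mathbb{R}^n$, i.e. the convex hull of the standard basis vectors $e_1,\dots,e_n$. *)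

theory Defs
  imports "HOL-Analysis.Analysis"
begin

definition nonneg_orthant :: "(real ^ 'n) set" where
  "nonneg_orthant = {x. \<forall>i. x $ i \<ge> 0}"

definition std_simplex :: "(real ^ 'n) set" where
  "std_simplex = convex hull (range (\<lambda>i. axis i 1))"

end

theory Submission
  imports Defs
begin

lemma simplex_eq:
  "(std_simplex :: (real^'n) set) = {x. (\<forall>i. 0 \<le> x$i) \<and> sum (\<lambda>i. x$i) UNIV = 1}"
  (is "_ = ?T")
proof
  have cT: "convex ?T"
  proof (rule convexI)
    fix x y :: "real^'n" and u v :: real
    assume "x \<in> ?T" "y \<in> ?T" "0 \<le> u" "0 \<le> v" "u + v = 1"
    then show "u *\<^sub>R x + v *\<^sub>R y \<in> ?T"
      by (simp add: sum.distrib sum_distrib_left[symmetric])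
  qed
  have "range (\<lambda>i. axis i (1::real)) \<subseteq> ?T"
    by (auto simp: axis_def)
  then show "std_simplex \<subseteq> ?T"
    unfolding std_simplex_def using hull_minimal[of _ ?T convex] cT by blast
next
  show "?T \<subseteq> std_simplex"
  proof
    fix x :: "real^'n" assume x: "x \<in> ?T"
    have e: "x = (\<Sum>i\<in>UNIV. x$i *\<^sub>R axis i (1::real))"
      using basis_expansion[of x] by (simp add: scalar_mult_eq_scaleR)
    have "(\<Sum>i\<in>UNIV. x$i *\<^sub>R axis i (1::real)) \<in> std_simplex"
      unfolding std_simplex_def
      by (rule convex_sum) (use x in \<open>auto intro: hull_inc\<close>)
    then show "x \<in> std_simplex" using e by simp
  qed
qed

theorem lemma1:
  fixes h :: "real ^ 'n \<Rightarrow> real ^ 'n"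
  assumes cont: "continuous_on nonneg_orthant h"
    and boundary: "\<And>x i. x \<in> nonneg_orthant \<Longrightarrow> x $ i = 0 \<Longrightarrow> h x $ i \<ge> 0"
    and no_nonneg: "\<not> (\<exists>x \<in> nonneg_orthant. x \<noteq> 0 \<and> (\<forall>i. h x $ i \<ge> 0))"
  shows "\<exists>v \<in> std_simplex. \<forall>i. h v $ i < 0"
proof -
  define S :: "(real^'n) set" where "S = std_simplex"
  have Seq: "S = {x. (\<forall>i. 0 \<le> x$i) \<and> sum (\<lambda>i. x$i) UNIV = 1}"
    unfolding S_def by (rule simplex_eq)
  have cS: "compact S" unfolding S_def std_simplex_def
    by (rule compact_convex_hull) (simp add: finite_imp_compact)
  have cvS: "convex S" unfolding S_def std_simplex_def by simp
  have neS: "S \<noteq> {}" unfolding S_def std_simplex_def by simp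
  have Ssub: "S \<subseteq> nonneg_orthant" unfolding Seq nonneg_orthant_def by auto
  have Snz: "x \<noteq> 0" if "x \<in> S" for x using that unfolding Seq by auto
  have hc: "continuous_on S h" using cont Ssub continuous_on_subset by blast
  define Orth :: "(real^'n) set" where "Orth = {y. \<forall>i. 0 \<le> y$i}"
  have cO: "closed Orth" unfolding Orth_def
    using closed_INT[of UNIV "\<lambda>i. {y::real^'n. y$i \<ge> 0}"] closed_halfspace_component_ge_cart
    by (simp add: Collect_all_eq) blast
  have dis: "h ` S \<inter> Orth = {}"
    using no_nonneg Ssub Snz unfolding Orth_def by fastforce
  obtain d where d: "d > 0" "\<And>x y. x \<in> h ` S \<Longrightarrow> y \<in> Orth \<Longrightarrow> d \<le> dist x y"
    using separate_compact_closed[OF compact_continuous_image[OF hc cS] cO dis] by blast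
  define e where "e = d / (2 * norm (1::real^'n))"
  have n1: "norm (1::real^'n) > 0" by simp
  have e0: "e > 0" unfolding e_def using d n1 by simp
  have enorm: "e * norm (1::real^'n) < d" unfolding e_def using d n1 by (simp add: field_simps)
  define p where "p x = (\<chi> i. max 0 (h x $ i + e))" for x
  define s where "s x = sum (\<lambda>i. p x $ i) UNIV" for x
  define f where "f x = (1 / (1 + s x)) *\<^sub>R (x + p x)" for x
  have s0: "s x \<ge> 0" for x unfolding s_def p_def by (simp add: sum_nonneg)
  have pc: "continuous_on S p" unfolding p_def
    by (intro continuous_on_vec_lambda continuous_intros continuous_on_component hc)
  have sc: "continuous_on S s" unfolding s_def
    by (intro continuous_intros continuous_on_component pc)
  have fc: "continuous_on S f" unfolding f_def
    using s0 by (intro continuous_intros sc pc) (smt (verit))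
  have fim: "f \<in> S \<rightarrow> S"
  proof
    fix x assume x: "x \<in> S"
    have "0 \<le> f x $ i" for i
      using x s0[of x] unfolding f_def Seq by (auto simp: p_def)
    moreover have "sum (\<lambda>i. f x $ i) UNIV = 1"
    proof -
      have "sum (\<lambda>i. f x $ i) UNIV = (1 / (1 + s x)) * (sum (\<lambda>i. x $ i) UNIV + s x)"
        unfolding f_def s_def by (simp add: sum_divide_distrib[symmetric] sum.distrib)
      also have "\<dots> = 1" using x s0[of x] unfolding Seq by simp
      finally show ?thesis .
    qed
    ultimately show "f x \<in> S" unfolding Seq by auto
  qed
  obtain x where x: "x \<in> S" "f x = x"
    using brouwer[OF cS cvS neS fc fim] by blast
  have px: "p x $ i = s x * x $ i" for i
  proof -
    have "(1 + s x) *\<^sub>R f x = x + p x" unfolding f_def using s0[of x]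
      by (simp add: field_simps)
    then have "(1 + s x) *\<^sub>R x = x + p x" using x by simp
    then have "((1 + s x) *\<^sub>R x) $ i = (x + p x) $ i" by simp
    then show ?thesis by (simp add: algebra_simps)
  qed
  show ?thesis
  proof (cases "s x = 0")
    case True
    have "h x $ i < 0" for i
    proof -
      have "p x $ i = 0" using px True by simp
      then have "h x $ i + e \<le> 0" unfolding p_def by (simp add: max_def split: if_splits)
      then show ?thesis using e0 by simp
    qed
    then show ?thesis using x S_def by blast
  next
    case False
    then have spos: "s x > 0" using s0[of x] by simp
    have ge: "h x $ i + e \<ge> 0" for i
    proof (cases "x $ i = 0")
      case True
      then show ?thesis using boundary[of x i] x Ssub e0 by auto
    next
      case False
      then have "x $ i > 0" using x unfolding Seq by (metis (mono_tags) mem_Collect_eq order_le_less)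
      then have "p x $ i > 0" using px spos by simp
      then show ?thesis unfolding p_def by (simp add: max_def split: if_splits)
    qed
    have yO: "h x + e *\<^sub>R 1 \<in> Orth" unfolding Orth_def using ge by simp
    have "d \<le> dist (h x) (h x + e *\<^sub>R 1)" using d(2)[OF imageI[OF x(1)] yO] .
    also have "\<dots> = e * norm (1::real^'n)" using e0 by (simp add: dist_norm)
    finally show ?thesis using enorm by simp
  qed
qed

end
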